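(* Let $\mathcal{K}^{\langle\infty\rangle}$ be a planar unbounded simple nested fractal, let $M\in\mathbb{Z}$ and let $\ell_{M,0}:V_M^{\langle M\rangle}\to\mathcal{A}$ be a bijection. Then $\mathcal{K}^{\langle\infty\rangle}$ has the good labelling property if and only if there exists an extension $\widetilde{\ell}_{M,0}:V_M^{\langle M+1\rangle}\to\mathcal{A}$ of $\ell_{M,0}$ such that for every $M$-complex $\Delta_M\subset\mathcal{K}^{\langle M+1\rangle}$, written as $\Delta_M=\mathcal{K}^{\langle M\rangle}+L^{M+1}\nu_{i}$ with $i\in\{1,\dots,N\}$, there exists a rotation $R_{\Delta_M}\in\mathcal{R}_M$ with $$\widetilde{\ell}_{M,0}\big(R_{\Delta_M}(v-L^{M+1}\nu_{i})\big)=\widetilde{\ell}_{M,0}(v),\qquad v\in V(\Delta_M).$$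
   Context: Setting: $L>1$, $N\ge2$, $\nu_1=0,\dots,\nu_N\in\mathbb{R}^2$, $\Psi_i(x)=x/L+\nu_i$, and $\mathcal{K}^{\langle 0\rangle}=\bigcup_i\Psi_i(\mathcal{K}^{\langle 0\rangle})$ is a planar simple nested fractal (essential fixed points $V_0^{\langle0\rangle}$: fixed points $x$ for which there are another fixed point $y$ and $\Psi_i\ne\Psi_j$ with $\Psi_i(x)=\Psi_j(y)$; open set condition, nesting $\Psi_i(\mathcal{K}^{\langle 0\rangle})\cap\Psi_j(\mathcal{K}^{\langle 0\rangle})=\Psi_i(V_0^{\langle 0\rangle})\cap\Psi_j(V_0^{\langle 0\rangle})$ for $i\ne j$, symmetry with respect to perpendicular bisectors of pairs of essential fixed points, and connectivity). Let $k=\#V_0^{\langle0\rangle}\ge3$; $V_0^{\langle0\rangle}$ spans a regular $k$-gon. $\mathcal{K}^{\langle M\rangle}=L^M\mathcal{K}^{\langle 0\rangle}$ ($M\in\mathbb{Z}$), $\mathcal{K}^{\langle\infty\rangle}=\bigcup_{M\ge0}\mathcal{K}^{\langle M\rangle}$. An $M$-complex is $\Delta_M=\mathcal{K}^{\langle M\rangle}+\nu_{\Delta_M}$, $\nu_{\Delta_M}=\sum_{j=M+1}^{J}L^j\nu_{i_j}$ ($J\ge M+1$), with vertex set $V(\Delta_M)=L^MV_0^{\langle0\rangle}+\nu_{\Delta_M}$. $V_M^{\langle M\rangle}=L^MV_0^{\langle0\rangle}$; $V_M^{\langle M+1\rangle}$ is the union of $V(\Delta_M)$ over $M$-complexes $\Delta_M\subset\mathcal{K}^{\langle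 M+1\rangle}$; $V_M^{\langle\infty\rangle}$ is the union of $V(\Delta_M)$ over all $M$-complexes. $\mathcal{A}$ is an alphabet of $k$ symbols; $\mathcal{R}_M$ is the set of the $k$ rotations about the barycenter of $\mathcal{K}^{\langle M\rangle}$ mapping $V_M^{\langle M\rangle}$ onto itself. A good labelling function of order $M$ is $\ell_M:V_M^{\langle\infty\rangle}\to\mathcal{A}$ that is bijective on $V_M^{\langle M\rangle}$ and such that for each $M$-complex $\Delta_M=\mathcal{K}^{\langle M\rangle}+\nu_{\Delta_M}$ there is $R_{\Delta_M}\in\mathcal{R}_M$ with $\ell_M(v)=\ell_M(R_{\Delta_M}(v-\nu_{\Delta_M}))$, $v\in V(\Delta_M)$. $\mathcal{K}^{\langle\infty\rangle}$ has the good labelling property if a good labelling function of some order exists. *)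

theory Defs
  imports "HOL-Analysis.Analysis"
begin

text \<open>The plane is modelled by the type complex.  Data of the fractal:
  similarity ratio L, number of maps N, translation vectors nu 1, ..., nu N
  (nu 1 = 0), and the compact attractor K0.\<close>

definition Psi :: "real \<Rightarrow> (nat \<Rightarrow> complex) \<Rightarrow> nat \<Rightarrow> complex \<Rightarrow> complex" where
  "Psi L nu i x = x / complex_of_real L + nu i"

definition fixed_pts :: "real \<Rightarrow> nat \<Rightarrow> (nat \<Rightarrow> complex) \<Rightarrow> complex set" where
  "fixed_pts L N nu = {x. \<exists>i\<in>{1..N}. Psi L nu i x = x}"

definition ess_fixed_pts :: "real \<Rightarrow> nat \<Rightarrow> (nat \<Rightarrow> complex) \<Rightarrow> complex set" where
  "ess_fixed_pts L N nu =
     {x \<in> fixed_pts L N nu. \<exists>y\<in>fixed_pts L N nu. y \<noteq> x \<and>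
        (\<exists>i\<in>{1..N}. \<exists>j\<in>{1..N}. Psi L nu i \<noteq> Psi L nu j \<and> Psi L nu i x = Psi L nu j y)}"

definition bisector_reflection :: "complex \<Rightarrow> complex \<Rightarrow> complex \<Rightarrow> complex" where
  "bisector_reflection x y z =
     z - (2 * inner (z - (x + y) / 2) (sgn (y - x))) *\<^sub>R sgn (y - x)"

definition planar_simple_nested_fractal ::
    "real \<Rightarrow> nat \<Rightarrow> (nat \<Rightarrow> complex) \<Rightarrow> complex set \<Rightarrow> bool" where
  "planar_simple_nested_fractal L N nu K0 \<longleftrightarrow>
     L > 1 \<and> N \<ge> 2 \<and> nu 1 = 0 \<and>
     \<comment> \<open>K0 is the attractor of the IFS\<close>
     compact K0 \<and> K0 \<noteq> {} \<and> K0 = (\<Union>i\<in>{1..N}. Psi L nu i ` K0) \<and>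
     \<comment> \<open>open set condition\<close>
     (\<exists>U. open U \<and> bounded U \<and> U \<noteq> {} \<and>
        (\<forall>i\<in>{1..N}. Psi L nu i ` U \<subseteq> U) \<and>
        (\<forall>i\<in>{1..N}. \<forall>j\<in>{1..N}. i \<noteq> j \<longrightarrow> Psi L nu i ` U \<inter> Psi L nu j ` U = {})) \<and>
     \<comment> \<open>nesting\<close>
     (\<forall>i\<in>{1..N}. \<forall>j\<in>{1..N}. i \<noteq> j \<longrightarrow>
        Psi L nu i ` K0 \<inter> Psi L nu j ` K0 =
        Psi L nu i ` ess_fixed_pts L N nu \<inter> Psi L nu j ` ess_fixed_pts L N nu) \<and>
     \<comment> \<open>symmetry\<close>
     (\<forall>x\<in>ess_fixed_pts L N nu. \<forall>y\<in>ess_fixed_pts L N nu. x \<noteq> y \<longrightarrow>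
        (\<forall>i\<in>{1..N}. \<exists>j\<in>{1..N}.
           bisector_reflection x y ` Psi L nu i ` ess_fixed_pts L N nu =
           Psi L nu j ` ess_fixed_pts L N nu)) \<and>
     \<comment> \<open>connectivity of the graph on V_0^(1)\<close>
     (let V1 = (\<Union>i\<in>{1..N}. Psi L nu i ` ess_fixed_pts L N nu);
          E = {(x, y). \<exists>i\<in>{1..N}. x \<in> Psi L nu i ` ess_fixed_pts L N nu \<and>
                                    y \<in> Psi L nu i ` ess_fixed_pts L N nu}
      in \<forall>x\<in>V1. \<forall>y\<in>V1. (x, y) \<in> E\<^sup>*)"

definition scl :: "real \<Rightarrow> int \<Rightarrow> complex" where
  "scl L M = complex_of_real (L powi M)"

definition K_M :: "real \<Rightarrow> complex set \<Rightarrow> int \<Rightarrow> complex set" where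
  "K_M L K0 M = (\<lambda>x. scl L M * x) ` K0"

text \<open>Admissible translation vectors nu_Delta of M-complexes:
  sum over j = M+1..J of L^j nu_(i_j), J \<ge> M+1, i_j \<in> {1..N}.\<close>
definition complex_shifts :: "real \<Rightarrow> nat \<Rightarrow> (nat \<Rightarrow> complex) \<Rightarrow> int \<Rightarrow> complex set" where
  "complex_shifts L N nu M =
     {(\<Sum>j\<in>{M+1..J}. scl L j * nu (w j)) | J w.
        M + 1 \<le> J \<and> (\<forall>j\<in>{M+1..J}. w j \<in> {1..N})}"

definition M_complex :: "real \<Rightarrow> complex set \<Rightarrow> int \<Rightarrow> complex \<Rightarrow> complex set" where
  "M_complex L K0 M t = (\<lambda>x. x + t) ` K_M L K0 M"

definition cell_vertices :: "real \<Rightarrow> nat \<Rightarrow> (nat \<Rightarrow> complex) \<Rightarrow> int \<Rightarrow> complex \<Rightarrow> complex set" where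
  "cell_vertices L N nu M t = (\<lambda>x. scl L M * x + t) ` ess_fixed_pts L N nu"

definition V_MM :: "real \<Rightarrow> nat \<Rightarrow> (nat \<Rightarrow> complex) \<Rightarrow> int \<Rightarrow> complex set" where
  "V_MM L N nu M = (\<lambda>x. scl L M * x) ` ess_fixed_pts L N nu"

definition V_M_next :: "real \<Rightarrow> nat \<Rightarrow> (nat \<Rightarrow> complex) \<Rightarrow> complex set \<Rightarrow> int \<Rightarrow> complex set" where
  "V_M_next L N nu K0 M =
     \<Union>{cell_vertices L N nu M t | t. t \<in> complex_shifts L N nu M \<and>
                                     M_complex L K0 M t \<subseteq> K_M L K0 (M + 1)}"

definition V_M_inf :: "real \<Rightarrow> nat \<Rightarrow> (nat \<Rightarrow> complex) \<Rightarrow> int \<Rightarrow> complex set" where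
  "V_M_inf L N nu M = (\<Union>t\<in>complex_shifts L N nu M. cell_vertices L N nu M t)"

text \<open>Barycenter of K^(M), taken as the barycenter of its vertex polygon V_M^(M).\<close>
definition barycenter_M :: "real \<Rightarrow> nat \<Rightarrow> (nat \<Rightarrow> complex) \<Rightarrow> int \<Rightarrow> complex" where
  "barycenter_M L N nu M =
     (\<Sum>v\<in>V_MM L N nu M. v) / of_nat (card (V_MM L N nu M))"

definition rotations_M :: "real \<Rightarrow> nat \<Rightarrow> (nat \<Rightarrow> complex) \<Rightarrow> int \<Rightarrow> (complex \<Rightarrow> complex) set" where
  "rotations_M L N nu M =
     {R. \<exists>u. norm u = 1 \<and>
            R = (\<lambda>z. barycenter_M L N nu M + u * (z - barycenter_M L N nu M)) \<and>
            R ` V_MM L N nu M = V_MM L N nu M}"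

definition good_labelling ::
    "real \<Rightarrow> nat \<Rightarrow> (nat \<Rightarrow> complex) \<Rightarrow> 'a set \<Rightarrow> int \<Rightarrow> (complex \<Rightarrow> 'a) \<Rightarrow> bool" where
  "good_labelling L N nu A M l \<longleftrightarrow>
     (\<forall>v\<in>V_M_inf L N nu M. l v \<in> A) \<and>
     bij_betw l (V_MM L N nu M) A \<and>
     (\<forall>t\<in>complex_shifts L N nu M. \<exists>R\<in>rotations_M L N nu M.
        \<forall>v\<in>cell_vertices L N nu M t. l v = l (R (v - t)))"

definition good_labelling_property ::
    "real \<Rightarrow> nat \<Rightarrow> (nat \<Rightarrow> complex) \<Rightarrow> 'a set \<Rightarrow> bool" where
  "good_labelling_property L N nu A \<longleftrightarrow> (\<exists>M l. good_labelling L N nu A M l)"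

end

theory Submission
  imports Defs
begin


lemma bisector_form:
  assumes "x \<noteq> y"
  shows "bisector_reflection x y z = (x+y)/2 - (sgn (y-x))^2 * cnj (z - (x+y)/2)"
proof -
  define s where "s = sgn (y - x)"
  define m where "m = (x+y)/2"
  have s1: "s * cnj s = 1" using assms unfolding s_def
    by (simp add: complex_norm_square[symmetric] norm_sgn)
  have inn: "inner (z - m) s = Re ((z - m) * cnj s)"
    by (simp add: inner_complex_def)
  have "complex_of_real (2 * Re ((z - m) * cnj s)) = (z - m) * cnj s + cnj ((z - m) * cnj s)"
    using complex_add_cnj[of "(z - m) * cnj s"] by simp
  hence "(2 * inner (z - m) s) *\<^sub>R s = ((z - m) * cnj s + cnj (z - m) * s) * s"
    by (simp add: inn scaleR_conv_of_real)
  also have "\<dots> = (z - m) * (s * cnj s) + cnj (z - m) * s^2"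
    by (simp add: algebra_simps power2_eq_square)
  finally have "(2 * inner (z - m) s) *\<^sub>R s = (z - m) + cnj (z-m) * s^2" using s1 by simp
  thus ?thesis unfolding bisector_reflection_def s_def[symmetric] m_def[symmetric]
    by (simp add: algebra_simps)
qed

lemma sgn_sq_cnj: "x \<noteq> y \<Longrightarrow> (sgn (y-x))^2 * cnj (sgn (y-x))^2 = 1"
  by (metis (no_types, lifting) complex_cnj_power complex_norm_square norm_sgn
      of_real_1 power_mult_distrib power_one right_minus_eq)

lemma bisector_invol:
  assumes "x \<noteq> y"
  shows "bisector_reflection x y (bisector_reflection x y z) = z"
  using sgn_sq_cnj[OF assms]
  by (simp add: bisector_form[OF assms] algebra_simps)

lemma bisector_swap:
  assumes "x \<noteq> y"
  shows "bisector_reflection x y x = y"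
proof -
  define d where "d = y - x"
  have d0: "d \<noteq> 0" using assms d_def by auto
  have "(sgn d)^2 * cnj d = d"
  proof -
    have "(sgn d)^2 * cnj d = d * (d * cnj d) / (complex_of_real (norm d))^2"
      by (simp add: sgn_div_norm power2_eq_square divide_inverse scaleR_conv_of_real algebra_simps)
    also have "\<dots> = d" using d0 by (simp add: complex_norm_square[symmetric])
    finally show ?thesis .
  qed
  have "(sgn (y-x))^2 * cnj (x - (x+y)/2) = (x - y)/2"
  proof -
    have e: "x - (x+y)/2 = -(y-x)/2" by (simp add: field_simps)
    have "(sgn (y-x))^2 * cnj (x - (x+y)/2) = - ((sgn (y-x))^2 * cnj (y-x)) / 2"
      unfolding e by (simp add: algebra_simps)
    also have "\<dots> = (x - y)/2" using \<open>(sgn d)^2 * cnj d = d\<close> unfolding d_def by simp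
    finally show ?thesis .
  qed
  thus ?thesis by (simp add: bisector_form[OF assms] field_simps)
qed

lemma avg_fixed:
  fixes T :: "complex \<Rightarrow> complex"
  assumes fin: "finite S" and ne: "S \<noteq> {}" and inj: "inj_on T S" and im: "T ` S = S"
    and T: "\<And>z. T z = a + b * cnj z"
  shows "T (sum id S / of_nat (card S)) = sum id S / of_nat (card S)"
proof -
  have n0: "(of_nat (card S) :: complex) \<noteq> 0" using fin ne by simp
  have "sum id S = sum id (T ` S)" using im by simp
  also have "\<dots> = sum T S" using sum.reindex[OF inj, of id] by simp
  also have "\<dots> = of_nat (card S) * a + b * cnj (sum id S)"
    by (simp add: T sum.distrib sum_distrib_left cnj_sum)
  finally have e: "sum id S = of_nat (card S) * a + b * cnj (sum id S)" .
  have "T (sum id S / of_nat (card S)) = a + b * cnj (sum id S) / of_nat (card S)"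
    by (simp add: T)
  also have "\<dots> = (of_nat (card S) * a + b * cnj (sum id S)) / of_nat (card S)"
    using n0 by (simp add: field_simps)
  also have "\<dots> = sum id S / of_nat (card S)" by (simp only: e[symmetric])
  finally show ?thesis .
qed

lemma two_pts_card:
  assumes "S \<subseteq> {p, q}" shows "card S \<le> 2"
proof -
  have "card S \<le> card {p, q}" using assms by (intro card_mono) auto
  also have "\<dots> \<le> 2" by (simp add: card_insert_le_m1)
  finally show ?thesis .
qed

lemma sq_const_card:
  fixes c K :: complex
  assumes "\<forall>z\<in>S. (z - c)^2 = K"
  shows "card S \<le> 2"
proof (cases "S = {}")
  case True thus ?thesis by simp
next
  case False
  then obtain z0 where z0: "z0 \<in> S" by auto
  have "S \<subseteq> {z0, c - (z0 - c)}"
  proof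
    fix z assume z: "z \<in> S"
    have "(z - c)^2 = (z0 - c)^2" using assms z z0 by auto
    hence "(z - c - (z0 - c)) * (z - c + (z0 - c)) = 0" by (simp add: algebra_simps power2_eq_square)
    hence "z - c - (z0 - c) = 0 \<or> z - c + (z0 - c) = 0" by simp
    moreover have "z - c - (z0 - c) = 0 \<Longrightarrow> z = z0" by simp
    moreover have "z - c + (z0 - c) = 0 \<Longrightarrow> z = c - (z0 - c)" by (simp add: algebra_simps add_eq_0_iff)
    ultimately have "z = z0 \<or> z = c - (z0 - c)" by blast
    thus "z \<in> {z0, c - (z0 - c)}" by auto
  qed
  thus ?thesis by (rule two_pts_card)
qed

lemma two_circles_card:
  fixes g e :: complex and r :: real
  assumes e0: "e \<noteq> 0" and h: "\<forall>z\<in>S. norm (z - g) = r \<and> norm (z + e - g) = r"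
  shows "card S \<le> 2"
proof -
  define a where "a = -((norm e)^2) / 2"
  define c where "c = sqrt ((r * norm e)^2 - a^2)"
  have ce: "cnj e \<noteq> 0" using e0 by simp
  have "S \<subseteq> {g + Complex a c / cnj e, g + Complex a (-c) / cnj e}"
  proof
    fix z assume z: "z \<in> S"
    define w where "w = z - g"
    define q where "q = w * cnj e"
    have n1: "norm w = r" and n2: "norm (w + e) = r" using h z unfolding w_def
      by (auto simp: algebra_simps)
    have "(norm (w + e))^2 = (norm w)^2 + 2 * Re q + (norm e)^2"
      unfolding q_def cmod_power2 by (simp add: power2_eq_square algebra_simps)
    hence req: "Re q = a" using n1 n2 unfolding a_def by (simp add: field_simps)
    have "norm q = r * norm e" using n1 unfolding q_def by (simp add: norm_mult)
    hence "(Re q)^2 + (Im q)^2 = (r * norm e)^2" by (metis cmod_power2)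
    hence "(Im q)^2 = (r * norm e)^2 - a^2" using req by simp
    hence "Im q = c \<or> Im q = - c" unfolding c_def
      by (metis real_sqrt_abs abs_if minus_minus)
    hence "q = Complex a c \<or> q = Complex a (-c)" using req by (auto simp: complex_eq_iff)
    moreover have "z = g + q / cnj e" using ce unfolding q_def w_def by simp
    ultimately show "z \<in> {g + Complex a c / cnj e, g + Complex a (-c) / cnj e}" by auto
  qed
  thus ?thesis by (rule two_pts_card)
qed



locale fr =
  fixes L :: real and N :: nat and nu :: "nat \<Rightarrow> complex" and K0 :: "complex set"
  assumes fractal: "planar_simple_nested_fractal L N nu K0"
    and k3: "card (ess_fixed_pts L N nu) \<ge> 3"
begin

abbreviation V where "V \<equiv> ess_fixed_pts L N nu"
abbreviation P where "P \<equiv> Psi L nu"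
abbreviation lam where "lam \<equiv> complex_of_real L"

lemma basics: "L > 1" "N \<ge> 2" "nu 1 = 0" "compact K0" "K0 \<noteq> {}"
  "K0 = (\<Union>i\<in>{1..N}. P i ` K0)"
  using fractal unfolding planar_simple_nested_fractal_def by auto

lemma nest: "i \<in> {1..N} \<Longrightarrow> j \<in> {1..N} \<Longrightarrow> i \<noteq> j \<Longrightarrow> P i ` K0 \<inter> P j ` K0 = P i ` V \<inter> P j ` V"
  using fractal unfolding planar_simple_nested_fractal_def by auto

lemma symm: "x \<in> V \<Longrightarrow> y \<in> V \<Longrightarrow> x \<noteq> y \<Longrightarrow> i \<in> {1..N} \<Longrightarrow>
   \<exists>j\<in>{1..N}. bisector_reflection x y ` P i ` V = P j ` V"
  using fractal unfolding planar_simple_nested_fractal_def by blast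

lemma finV: "finite V" using k3 by (metis card.infinite not_numeral_le_zero)
lemma neV: "V \<noteq> {}" using k3 by auto
lemma lam0: "lam \<noteq> 0" using basics(1) by simp
lemma P_eq: "P i z = z / lam + nu i" by (simp add: Psi_def)
lemma P_inj: "P i a = P i b \<Longrightarrow> a = b" using lam0 by (simp add: P_eq)
lemma P1: "P 1 z = z / lam" using basics(3) by (simp add: P_eq)
lemma one_in: "1 \<in> {1..N}" using basics(2) by simp

definition bar :: complex where "bar = sum id V / of_nat (card V)"
definition rot :: "complex \<Rightarrow> complex \<Rightarrow> complex" where "rot u z = bar + u * (z - bar)"
definition G where "G = {u. norm u = 1 \<and> rot u ` V = V}"
definition BP :: "(complex \<Rightarrow> complex) \<Rightarrow> bool" where
  "BP f \<longleftrightarrow> (\<forall>k\<in>{1..N}. \<exists>k'\<in>{1..N}. f ` P k ` V = P k' ` V)"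

lemma BP_comp: "BP f \<Longrightarrow> BP h \<Longrightarrow> BP (f \<circ> h)"
  unfolding BP_def by (metis image_comp)

definition V1 where "V1 = (\<Union>i\<in>{1..N}. P i ` V)"
definition gc :: complex where "gc = sum id V1 / of_nat (card V1)"

lemma finV1: "finite V1" using finV unfolding V1_def by auto
lemma neV1: "V1 \<noteq> {}" using neV one_in unfolding V1_def by auto

lemma bis_props:
  assumes "x \<noteq> y"
  shows "\<exists>a b. norm b = 1 \<and> (\<forall>z. bisector_reflection x y z = a + b * cnj z)"
proof -
  have "norm ((sgn (y-x))^2) = 1" using assms by (simp add: norm_power norm_sgn)
  thus ?thesis using bisector_form[OF assms]
    by (intro exI[of _ "(x+y)/2 + (sgn (y-x))^2 * cnj ((x+y)/2)"] exI[of _ "- ((sgn (y-x))^2)"])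
       (auto simp: algebra_simps)
qed

lemma aa_isom: "norm b = 1 \<Longrightarrow> norm ((a + b * cnj z) - (a + b * cnj w)) = norm (z - w)"
proof -
  assume b: "norm b = 1"
  have "(a + b * cnj z) - (a + b * cnj w) = b * cnj (z - w)" by (simp add: algebra_simps)
  moreover have "norm (b * cnj (z - w)) = norm (z - w)" by (simp only: norm_mult complex_mod_cnj b mult_1)
  ultimately show ?thesis by simp
qed

lemma bis_isom: "x \<noteq> y \<Longrightarrow> norm (bisector_reflection x y z - bisector_reflection x y w) = norm (z - w)"
  using bis_props aa_isom by metis

lemma bis_inj: "x \<noteq> y \<Longrightarrow> inj (bisector_reflection x y)"
  by (metis bisector_invol injI)

lemma bis_V1:
  assumes "x \<in> V" "y \<in> V" "x \<noteq> y"
  shows "bisector_reflection x y ` V1 = V1"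
proof -
  let ?s = "bisector_reflection x y"
  have sub: "?s ` V1 \<subseteq> V1"
  proof
    fix z assume "z \<in> ?s ` V1"
    then obtain i v where i: "i \<in> {1..N}" and v: "v \<in> V" and z: "z = ?s (P i v)"
      unfolding V1_def by auto
    obtain j where j: "j \<in> {1..N}" and e: "?s ` P i ` V = P j ` V" using symm[OF assms i] by blast
    have "z \<in> P j ` V" using z v e by blast
    thus "z \<in> V1" using j unfolding V1_def by auto
  qed
  moreover have "V1 \<subseteq> ?s ` V1"
  proof
    fix z assume "z \<in> V1"
    hence "?s z \<in> V1" using sub by auto
    thus "z \<in> ?s ` V1" using bisector_invol[OF assms(3)] by (metis image_eqI)
  qed
  ultimately show ?thesis by auto
qed

lemma bis_gc: "x \<in> V \<Longrightarrow> y \<in> V \<Longrightarrow> x \<noteq> y \<Longrightarrow> bisector_reflection x y gc = gc"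
proof -
  assume a: "x \<in> V" "y \<in> V" "x \<noteq> y"
  obtain a b where ab: "\<forall>z. bisector_reflection x y z = a + b * cnj z" using bis_props[OF a(3)] by blast
  show ?thesis unfolding gc_def
    by (rule avg_fixed[OF finV1 neV1 inj_on_subset[OF bis_inj[OF a(3)]] bis_V1[OF a]]) (use ab in auto)
qed

lemma eqdist_gc: "x \<in> V \<Longrightarrow> y \<in> V \<Longrightarrow> norm (x - gc) = norm (y - gc)"
proof (cases "x = y")
  case False
  assume a: "x \<in> V" "y \<in> V"
  have "norm (x - gc) = norm (bisector_reflection x y x - bisector_reflection x y gc)"
    using bis_isom[OF False] by metis
  also have "\<dots> = norm (y - gc)" using bisector_swap[OF False] bis_gc[OF a False] by simp
  finally show ?thesis .
qed simp

lemma bis_V: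
  assumes xy: "x \<in> V" "y \<in> V" "x \<noteq> y"
  shows "bisector_reflection x y ` V = V"
proof -
  let ?s = "bisector_reflection x y"
  obtain a b where b1: "norm b = 1" and ab: "\<And>z. ?s z = a + b * cnj z"
    using bis_props[OF xy(3)] by blast
  obtain j where j: "j \<in> {1..N}" and ej: "?s ` P 1 ` V = P j ` V" using symm[OF xy one_in] by blast
  define e where "e = lam * nu j - (lam - 1) * a"
  have alg: "?s z = z' + e" if h: "?s (P 1 z) = P j z'" for z z'
  proof -
    have "a + b * cnj z / lam = z' / lam + nu j" using h unfolding P1 ab by (simp add: P_eq)
    hence "lam * a + b * cnj z = z' + lam * nu j" using lam0 by (simp add: field_simps)
    thus ?thesis unfolding e_def ab by (simp add: algebra_simps)
  qed
  have c1: "\<exists>z\<in>V. ?s z = z' + e" if z': "z' \<in> V" for z'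
  proof -
    have "P j z' \<in> ?s ` P 1 ` V" using ej z' by auto
    then obtain z where "z \<in> V" "?s (P 1 z) = P j z'" by auto
    thus ?thesis using alg by blast
  qed
  have c2: "\<exists>z'\<in>V. ?s z = z' + e" if z: "z \<in> V" for z
  proof -
    have "?s (P 1 z) \<in> P j ` V" using ej z by (metis image_eqI)
    then obtain z' where "z' \<in> V" "?s (P 1 z) = P j z'" by auto
    thus ?thesis using alg by blast
  qed
  have e0: "e = 0"
  proof (rule ccontr)
    assume ne: "e \<noteq> 0"
    define r where "r = norm (x - gc)"
    have "\<forall>z'\<in>V. norm (z' - gc) = r \<and> norm (z' + e - gc) = r"
    proof
      fix z' assume z': "z' \<in> V"
      then obtain z where z: "z \<in> V" "?s z = z' + e" using c1 by blast
      have "norm (z' + e - gc) = norm (?s z - ?s gc)" using z bis_gc[OF xy] by simp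
      also have "\<dots> = norm (z - gc)" by (rule bis_isom[OF xy(3)])
      finally show "norm (z' - gc) = r \<and> norm (z' + e - gc) = r"
        unfolding r_def using eqdist_gc z' z(1) xy(1) by metis
    qed
    hence "card V \<le> 2" by (rule two_circles_card[OF ne])
    thus False using k3 by simp
  qed
  show ?thesis
  proof
    show "?s ` V \<subseteq> V" using c2 e0 by auto
    show "V \<subseteq> ?s ` V" using c1 e0 by force
  qed
qed

lemma bis_bar: "x \<in> V \<Longrightarrow> y \<in> V \<Longrightarrow> x \<noteq> y \<Longrightarrow> bisector_reflection x y bar = bar"
proof -
  assume a: "x \<in> V" "y \<in> V" "x \<noteq> y"
  obtain a b where ab: "\<forall>z. bisector_reflection x y z = a + b * cnj z" using bis_props[OF a(3)] by blast
  show ?thesis unfolding bar_def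
    by (rule avg_fixed[OF finV neV inj_on_subset[OF bis_inj[OF a(3)]] bis_V[OF a]]) (use ab in auto)
qed

lemma eqdist_bar: "x \<in> V \<Longrightarrow> y \<in> V \<Longrightarrow> norm (x - bar) = norm (y - bar)"
proof (cases "x = y")
  case False
  assume a: "x \<in> V" "y \<in> V"
  have "norm (x - bar) = norm (bisector_reflection x y x - bisector_reflection x y bar)"
    using bis_isom[OF False] by metis
  also have "\<dots> = norm (y - bar)" using bisector_swap[OF False] bis_bar[OF a False] by simp
  finally show ?thesis .
qed simp

lemma ex_not_bar: "\<exists>x\<in>V. x \<noteq> bar"
proof (rule ccontr)
  assume "\<not> ?thesis"
  hence "V \<subseteq> {bar}" by auto
  hence "card V \<le> card {bar}" by (intro card_mono) auto
  hence "card V \<le> 1" by simp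
  thus False using k3 by simp
qed

end


lemma aa_unique:
  fixes z w a1 b1 a2 b2 :: complex
  assumes "z \<noteq> w" "a1 + b1 * cnj z = w" "a1 + b1 * cnj w = z" "a2 + b2 * cnj z = w" "a2 + b2 * cnj w = z"
  shows "a1 + b1 * cnj v = a2 + b2 * cnj v"
proof -
  have "b1 * (cnj z - cnj w) = (a1 + b1 * cnj z) - (a1 + b1 * cnj w)" by (simp add: algebra_simps)
  hence "b1 * (cnj z - cnj w) = w - z" using assms(2,3) by simp
  moreover have "b2 * (cnj z - cnj w) = (a2 + b2 * cnj z) - (a2 + b2 * cnj w)" by (simp add: algebra_simps)
  hence "b2 * (cnj z - cnj w) = w - z" using assms(4,5) by simp
  moreover have "cnj z - cnj w \<noteq> 0" using assms(1) by simp
  ultimately have "b1 = b2" by (metis mult_right_cancel)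
  moreover have "a1 = a2" using assms(2,4) \<open>b1 = b2\<close> by (metis add_right_cancel)
  ultimately show ?thesis by simp
qed

context fr begin

lemma rot_bar: "rot u bar = bar" by (simp add: rot_def)
lemma rot_mult: "rot u (rot v z) = rot (u * v) z" by (simp add: rot_def algebra_simps)
lemma rot_1: "rot 1 z = z" by (simp add: rot_def)
lemma G_1: "1 \<in> G" unfolding G_def by (simp add: rot_1[abs_def])
lemma G_mult: "u \<in> G \<Longrightarrow> v \<in> G \<Longrightarrow> u * v \<in> G"
proof -
  assume "u \<in> G" "v \<in> G"
  hence "norm u = 1" "norm v = 1" "rot u ` V = V" "rot v ` V = V" unfolding G_def by auto
  moreover have "rot (u * v) ` V = rot u ` rot v ` V" by (simp add: image_image rot_mult)
  ultimately show ?thesis unfolding G_def by (simp add: norm_mult)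
qed
lemma G_V: "u \<in> G \<Longrightarrow> x \<in> V \<Longrightarrow> rot u x \<in> V" unfolding G_def by auto

lemma rot_BP:
  assumes uG: "u \<in> G"
  shows "BP (rot u)"
proof (cases "u = 1")
  case True
  thus ?thesis unfolding BP_def by (auto simp: rot_1[abs_def])
next
  case False
  have u1: "norm u = 1" and uV: "rot u ` V = V" using uG unfolding G_def by auto
  obtain x where x: "x \<in> V" "x \<noteq> bar" using ex_not_bar by blast
  define y where "y = rot u x"
  have y: "y \<in> V" using G_V[OF uG x(1)] y_def by simp
  have xy: "x \<noteq> y"
  proof
    assume "x = y"
    hence "(u - 1) * (x - bar) = 0" unfolding y_def rot_def by (simp add: algebra_simps)
    thus False using False x(2) by simp
  qed
  let ?s = "bisector_reflection x y"
  obtain a b where b1: "norm b = 1" and ab: "\<And>z. ?s z = a + b * cnj z"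
    using bis_props[OF xy] by blast
  define \<tau> where "\<tau> = (\<lambda>z. ?s (rot u z))"
  define a' where "a' = a + b * cnj bar - b * cnj u * cnj bar"
  define b' where "b' = b * cnj u"
  have tau: "\<tau> z = a' + b' * cnj z" for z
    unfolding \<tau>_def ab a'_def b'_def rot_def by (simp add: algebra_simps)
  have b'1: "norm b' = 1" unfolding b'_def using b1 u1 by (simp add: norm_mult)
  have "\<tau> ` V = ?s ` (rot u ` V)" unfolding \<tau>_def by (simp add: image_image)
  hence tauV: "\<tau> ` V = V" using uV bis_V[OF x(1) y xy] by simp
  have taubar: "\<tau> bar = bar" unfolding \<tau>_def using rot_bar bis_bar[OF x(1) y xy] by simp
  have taurel: "\<tau> v - bar = b' * cnj (v - bar)" for v
  proof -
    have "\<tau> v - bar = \<tau> v - \<tau> bar" using taubar by simp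
    thus ?thesis by (simp add: tau algebra_simps)
  qed
  have bb: "b' * cnj b' = 1" using b'1 by (metis complex_norm_square of_real_1 power_one)
  have tau_inv: "\<tau> (\<tau> v) = v" for v
  proof -
    have "\<tau> (\<tau> v) - bar = b' * cnj (b' * cnj (v - bar))" using taurel[of "\<tau> v"] taurel[of v] by simp
    also have "\<dots> = (b' * cnj b') * (v - bar)" by (simp add: algebra_simps)
    finally show ?thesis using bb by simp
  qed
  obtain z where z: "z \<in> V" "\<tau> z \<noteq> z"
  proof (rule ccontr)
    assume "\<not> thesis"
    hence fix_all: "\<forall>z\<in>V. \<tau> z = z" using that by blast
    define R where "R = norm (x - bar)"
    have "\<forall>z\<in>V. (z - bar)^2 = b' * (complex_of_real R)^2"
    proof
      fix z assume zV: "z \<in> V"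
      have "\<tau> z = z" using fix_all zV by blast
      with taurel[of z] have h: "z - bar = b' * cnj (z - bar)" by metis
      have "(z - bar)^2 = (z - bar) * (z - bar)" by (simp add: power2_eq_square)
      also have "\<dots> = (z - bar) * (b' * cnj (z - bar))" by (subst (2) h) (rule refl)
      also have "\<dots> = b' * ((z - bar) * cnj (z - bar))" by (simp add: algebra_simps)
      also have "\<dots> = b' * (complex_of_real (norm (z - bar)))^2" by (simp only: complex_norm_square[of "z - bar", symmetric] of_real_power)
      finally show "(z - bar)^2 = b' * (complex_of_real R)^2" unfolding R_def using eqdist_bar[OF zV x(1)] by simp
    qed
    hence "card V \<le> 2" by (rule sq_const_card)
    thus False using k3 by simp
  qed
  define w where "w = \<tau> z"
  have w: "w \<in> V" "z \<noteq> w" using z tauV w_def by auto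
  obtain a2 b2 where ab2: "\<And>v. bisector_reflection z w v = a2 + b2 * cnj v"
    using bis_props[OF w(2)] by blast
  have tau_eq: "\<tau> v = bisector_reflection z w v" for v
  proof -
    have "a' + b' * cnj v = a2 + b2 * cnj v"
    proof (rule aa_unique[OF w(2)])
      show "a' + b' * cnj z = w" using tau w_def by simp
      show "a' + b' * cnj w = z" using tau tau_inv w_def by metis
      show "a2 + b2 * cnj z = w" using bisector_swap[OF w(2)] ab2 by metis
      show "a2 + b2 * cnj w = z" using bisector_swap[OF w(2)] bisector_invol[OF w(2)] ab2 by metis
    qed
    thus ?thesis using tau ab2 by simp
  qed
  have BPs: "BP (bisector_reflection p q)" if "p \<in> V" "q \<in> V" "p \<noteq> q" for p q
    unfolding BP_def using symm[OF that] by blast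
  have "\<tau> = bisector_reflection z w" using tau_eq by (rule ext)
  hence "BP (?s \<circ> \<tau>)" using BP_comp[OF BPs[OF x(1) y xy] BPs[OF z(1) w(1) w(2)]] by simp
  moreover have "?s \<circ> \<tau> = rot u" unfolding \<tau>_def using bisector_invol[OF xy] by auto
  ultimately show ?thesis by simp
qed

lemma rot_comm:
  assumes uG: "u \<in> G" and k: "k \<in> {1..N}"
  shows "\<exists>k'\<in>{1..N}. \<forall>z. rot u (P k z) = P k' (rot u z)"
proof -
  obtain k' where k': "k' \<in> {1..N}" and e: "rot u ` P k ` V = P k' ` V"
    using rot_BP[OF uG] k unfolding BP_def by blast
  have uV: "rot u ` V = V" using uG unfolding G_def by auto
  define c where "c = bar + u * nu k - u * bar - bar / lam + u * bar / lam - nu k'"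
  have D: "rot u (P k z) = P k' (rot u z) + c" for z
    unfolding c_def rot_def P_eq using lam0 by (simp add: field_simps)
  define S where "S = P k' ` V"
  have "(\<lambda>y. y + c) ` S = S"
  proof -
    have "(\<lambda>z. P k' (rot u z) + c) ` V = (\<lambda>y. P k' y + c) ` (rot u ` V)" by (simp add: image_image)
    also have "\<dots> = (\<lambda>y. y + c) ` S" using uV by (simp add: S_def image_image)
    finally have "(\<lambda>y. y + c) ` S = (\<lambda>z. P k' (rot u z) + c) ` V" by simp
    also have "\<dots> = rot u ` P k ` V" using D by (simp add: image_image)
    finally show ?thesis using e S_def by simp
  qed
  have finS: "finite S" and neS: "S \<noteq> {}" using finV neV S_def by auto
  have "sum id S = sum id ((\<lambda>y. y + c) ` S)" using \<open>(\<lambda>y. y + c) ` S = S\<close> by simp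
  also have "\<dots> = sum (\<lambda>y. y + c) S" by (subst sum.reindex) (auto simp: inj_on_def)
  also have "\<dots> = sum id S + of_nat (card S) * c" by (simp add: sum.distrib)
  finally have "of_nat (card S) * c = 0" by simp
  hence c0: "c = 0" using finS neS by simp
  show ?thesis using k' D c0 by auto
qed

end


context fr begin

primrec cm :: "nat \<Rightarrow> (nat \<Rightarrow> nat) \<Rightarrow> complex \<Rightarrow> complex" where
  "cm 0 w z = z"
| "cm (Suc n) w z = P (w (Suc n)) (cm n w z)"

definition valid :: "nat \<Rightarrow> (nat \<Rightarrow> nat) \<Rightarrow> bool" where
  "valid n w \<longleftrightarrow> (\<forall>j\<in>{1..n}. w j \<in> {1..N})"

definition Vn :: "nat \<Rightarrow> complex set" where
  "Vn n = {cm n w x | w x. valid n w \<and> x \<in> V}"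

lemma cm_local: "(\<forall>j\<in>{1..n}. w j = w' j) \<Longrightarrow> cm n w z = cm n w' z"
  by (induction n) auto

lemma cm_scale: "lam^n * cm n w x = x + (\<Sum>j=1..n. lam^j * nu (w j))"
proof (induction n)
  case 0 thus ?case by simp
next
  case (Suc n)
  have "lam^(Suc n) * cm (Suc n) w x = lam^n * cm n w x + lam^(Suc n) * nu (w (Suc n))"
    using lam0 by (simp add: P_eq field_simps)
  thus ?case using Suc by simp
qed

lemma Vn0: "Vn 0 = V" unfolding Vn_def valid_def by auto

lemma Vn_Suc: "z \<in> Vn (Suc n) \<longleftrightarrow> (\<exists>i\<in>{1..N}. \<exists>y\<in>Vn n. z = P i y)"
proof
  assume "z \<in> Vn (Suc n)"
  then obtain w x where w: "valid (Suc n) w" "x \<in> V" "z = cm (Suc n) w x" unfolding Vn_def by auto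
  have "valid n w" using w(1) unfolding valid_def by auto
  hence "cm n w x \<in> Vn n" using w(2) unfolding Vn_def by auto
  moreover have "w (Suc n) \<in> {1..N}" using w(1) unfolding valid_def by auto
  ultimately show "\<exists>i\<in>{1..N}. \<exists>y\<in>Vn n. z = P i y" using w(3) by auto
next
  assume "\<exists>i\<in>{1..N}. \<exists>y\<in>Vn n. z = P i y"
  then obtain i y where i: "i \<in> {1..N}" and y: "y \<in> Vn n" and z: "z = P i y" by auto
  obtain w x where w: "valid n w" "x \<in> V" "y = cm n w x" using y unfolding Vn_def by auto
  define w' where "w' = w(Suc n := i)"
  have "valid (Suc n) w'" using w(1) i unfolding valid_def w'_def by (auto simp: le_Suc_eq)
  moreover have "cm n w' x = cm n w x" by (rule cm_local) (auto simp: w'_def)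
  hence "z = cm (Suc n) w' x" using z w(3) by (simp add: w'_def)
  ultimately show "z \<in> Vn (Suc n)" using w(2) unfolding Vn_def by blast
qed

lemma cm_Vn: "valid n w \<Longrightarrow> x \<in> V \<Longrightarrow> cm n w x \<in> Vn n"
  unfolding Vn_def by blast

lemma PK: "i \<in> {1..N} \<Longrightarrow> P i ` K0 \<subseteq> K0"
  using basics(6) by blast

lemma V_K0: "V \<subseteq> K0"
proof
  fix x assume x: "x \<in> V"
  then obtain i where i: "i \<in> {1..N}" and fx: "P i x = x"
    unfolding ess_fixed_pts_def fixed_pts_def by auto
  obtain a where a: "a \<in> K0" using basics(5) by auto
  have inK: "(P i ^^ k) a \<in> K0" for k
    by (induction k) (use a PK[OF i] in auto)
  have form: "(P i ^^ k) a = x + (a - x) * (1 / lam)^k" for k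
  proof (induction k)
    case 0 thus ?case by simp
  next
    case (Suc k)
    have "x = x / lam + nu i" using fx by (simp add: P_eq)
    hence nx: "nu i = x - x / lam" by (metis add_diff_cancel_left')
    have "(P i ^^ Suc k) a = (x + (a - x) * (1/lam)^k) / lam + (x - x / lam)"
      by (simp only: funpow.simps comp_def Suc.IH P_eq nx)
    also have "\<dots> = x + (a - x) * (1/lam)^Suc k" using lam0 by (simp add: field_simps)
    finally show ?case .
  qed
  have "norm (1 / lam) = 1 / L" using basics(1) by (simp add: norm_divide)
  also have "\<dots> < 1" using basics(1) by simp
  finally have "norm (1 / lam) < 1" .
  hence "(\<lambda>k. (1 / lam)^k) \<longlonglongrightarrow> 0" by (rule LIMSEQ_power_zero)
  hence "(\<lambda>k. x + (a - x) * (1 / lam)^k) \<longlonglongrightarrow> x + (a - x) * 0"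
    by (rule tendsto_add[OF tendsto_const tendsto_mult[OF tendsto_const]])
  moreover have "(\<lambda>k. (P i ^^ k) a) = (\<lambda>k. x + (a - x) * (1 / lam)^k)" using form by (rule ext)
  ultimately have lim: "(\<lambda>k. (P i ^^ k) a) \<longlonglongrightarrow> x" by simp
  have "closed K0" using basics(4) by (rule compact_imp_closed)
  show "x \<in> K0" by (rule closed_sequentially[OF \<open>closed K0\<close> _ lim]) (use inK in auto)
qed

lemma Vn_K0: "Vn n \<subseteq> K0"
proof (induction n)
  case 0 thus ?case using Vn0 V_K0 by simp
next
  case (Suc n)
  show ?case
  proof
    fix z assume "z \<in> Vn (Suc n)"
    then obtain i y where iy: "i \<in> {1..N}" "y \<in> Vn n" "z = P i y" using Vn_Suc by blast
    have "y \<in> K0" using Suc.IH iy(2) by blast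
    hence "P i y \<in> P i ` K0" by (rule imageI)
    thus "z \<in> K0" using PK[OF iy(1)] iy(3) by blast
  qed
qed

lemma nest_pts:
  assumes "i \<in> {1..N}" "j \<in> {1..N}" "i \<noteq> j" "y \<in> K0" "y' \<in> K0" "P i y = P j y'"
  shows "y \<in> V \<and> y' \<in> V"
proof -
  have "P i y \<in> P i ` K0" using assms(4) by blast
  moreover have "P i y \<in> P j ` K0" unfolding assms(6) using assms(5) by (rule imageI)
  ultimately have "P i y \<in> P i ` K0 \<inter> P j ` K0" by blast
  hence "P i y \<in> P i ` V \<inter> P j ` V" using nest[OF assms(1-3)] by (simp only:)
  then obtain x x' where xx: "x \<in> V" "P i y = P i x" "x' \<in> V" "P i y = P j x'" by auto
  have "y = x" using xx(2) by (rule P_inj)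
  moreover have "P j y' = P j x'" using xx(4) assms(6) by simp
  hence "y' = x'" by (rule P_inj)
  ultimately show ?thesis using xx by simp
qed

lemma rot_cm:
  assumes uG: "u \<in> G"
  shows "valid n w \<Longrightarrow> \<exists>w'. valid n w' \<and> (\<forall>z. rot u (cm n w z) = cm n w' (rot u z))"
proof (induction n)
  case 0 thus ?case by (auto simp: valid_def)
next
  case (Suc n)
  have "valid n w" using Suc.prems unfolding valid_def by auto
  then obtain w' where w': "valid n w'" "\<forall>z. rot u (cm n w z) = cm n w' (rot u z)" using Suc.IH by blast
  have "w (Suc n) \<in> {1..N}" using Suc.prems unfolding valid_def by auto
  then obtain k' where k': "k' \<in> {1..N}" "\<forall>z. rot u (P (w (Suc n)) z) = P k' (rot u z)"
    using rot_comm[OF uG] by blast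
  define w'' where "w'' = w'(Suc n := k')"
  have v: "valid (Suc n) w''" using w'(1) k'(1) unfolding valid_def w''_def by (auto simp: le_Suc_eq)
  have "cm n w'' z = cm n w' z" for z by (rule cm_local) (auto simp: w''_def)
  hence "\<forall>z. rot u (cm (Suc n) w z) = cm (Suc n) w'' (rot u z)" using w'(2) k'(2) by (simp add: w''_def)
  thus ?case using v by blast
qed

end


locale fr2 = fr L N nu K0 for L N nu K0 +
  fixes g :: "complex \<Rightarrow> 'a" and A :: "'a set"
  assumes gbij: "bij_betw g V A"
    and gcons: "\<forall>i\<in>{1..N}. \<exists>u\<in>G. \<forall>x\<in>V. g (rot u x) = g (x + lam * nu i)"
begin

definition uu :: "nat \<Rightarrow> complex" where
  "uu i = (SOME u. u \<in> G \<and> (\<forall>x\<in>V. g (rot u x) = g (x + lam * nu i)))"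

lemma uu: "i \<in> {1..N} \<Longrightarrow> uu i \<in> G \<and> (\<forall>x\<in>V. g (rot (uu i) x) = g (x + lam * nu i))"
  unfolding uu_def by (rule someI_ex) (use gcons in blast)

lemma ginj: "inj_on g V" using gbij by (rule bij_betw_imp_inj_on)

lemma uu1: "uu 1 = 1"
proof -
  obtain x where x: "x \<in> V" "x \<noteq> bar" using ex_not_bar by blast
  have "g (rot (uu 1) x) = g x" using uu[OF one_in] x(1) basics(3) by simp
  moreover have "rot (uu 1) x \<in> V" using uu[OF one_in] x(1) G_V by blast
  ultimately have "rot (uu 1) x = x" using ginj x(1) by (meson inj_on_eq_iff)
  hence "(uu 1 - 1) * (x - bar) = 0" unfolding rot_def by (simp add: algebra_simps)
  thus ?thesis using x(2) by simp
qed

lemma cons: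
  assumes "i \<in> {1..N}" "j \<in> {1..N}" "x \<in> V" "y \<in> V" "P i x = P j y"
  shows "rot (uu i) x = rot (uu j) y"
proof -
  have "x + lam * nu i = lam * P i x" using lam0 by (simp add: P_eq field_simps)
  moreover have "y + lam * nu j = lam * P j y" using lam0 by (simp add: P_eq field_simps)
  ultimately have "g (rot (uu i) x) = g (rot (uu j) y)" using uu[OF assms(1)] uu[OF assms(2)] assms by simp
  moreover have "rot (uu i) x \<in> V" "rot (uu j) y \<in> V" using uu assms G_V by blast+
  ultimately show ?thesis using ginj by (meson inj_on_eq_iff)
qed

primrec Phi :: "nat \<Rightarrow> complex \<Rightarrow> 'a" where
  "Phi 0 z = g z"
| "Phi (Suc n) z = (let p = (SOME p. fst p \<in> {1..N} \<and> snd p \<in> Vn n \<and> z = P (fst p) (snd p))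
      in Phi n (rot (uu (fst p)) (snd p)))"

lemma Phi_step:
  assumes i: "i \<in> {1..N}" and y: "y \<in> Vn n"
  shows "Phi (Suc n) (P i y) = Phi n (rot (uu i) y)"
proof -
  define p where "p = (SOME p. fst p \<in> {1..N} \<and> snd p \<in> Vn n \<and> P i y = P (fst p) (snd p))"
  have "\<exists>p. fst p \<in> {1..N} \<and> snd p \<in> Vn n \<and> P i y = P (fst p) (snd p)"
    using i y by (intro exI[of _ "(i, y)"]) simp
  hence "fst p \<in> {1..N} \<and> snd p \<in> Vn n \<and> P i y = P (fst p) (snd p)"
    unfolding p_def by (rule someI_ex)
  hence p: "fst p \<in> {1..N}" "snd p \<in> Vn n" "P i y = P (fst p) (snd p)" by auto
  have "rot (uu (fst p)) (snd p) = rot (uu i) y"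
  proof (cases "fst p = i")
    case True
    hence "snd p = y" using p(3) P_inj by metis
    thus ?thesis using True by simp
  next
    case False
    have K: "y \<in> K0" "snd p \<in> K0" using y p(2) Vn_K0 by blast+
    have "y \<in> V \<and> snd p \<in> V" using nest_pts[OF i p(1) False[symmetric] K p(3)] .
    thus ?thesis using cons[OF i p(1) _ _ p(3)] by simp
  qed
  thus ?thesis unfolding Phi.simps p_def[symmetric] Let_def by simp
qed

lemma Phi_cell: "valid n w \<Longrightarrow> \<exists>u\<in>G. \<forall>x\<in>V. Phi n (cm n w x) = g (rot u x)"
proof (induction n arbitrary: w)
  case 0 thus ?case using G_1 by (intro bexI[of _ 1]) (auto simp: rot_1)
next
  case (Suc n)
  define i where "i = w (Suc n)"
  have i: "i \<in> {1..N}" using Suc.prems unfolding valid_def i_def by auto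
  have vw: "valid n w" using Suc.prems unfolding valid_def by auto
  have uG: "uu i \<in> G" using uu[OF i] by blast
  obtain w' where w': "valid n w'" "\<forall>z. rot (uu i) (cm n w z) = cm n w' (rot (uu i) z)"
    using rot_cm[OF uG vw] by blast
  obtain u' where u': "u' \<in> G" "\<forall>x\<in>V. Phi n (cm n w' x) = g (rot u' x)" using Suc.IH[OF w'(1)] by blast
  have "Phi (Suc n) (cm (Suc n) w x) = g (rot (u' * uu i) x)" if x: "x \<in> V" for x
  proof -
    have "Phi (Suc n) (cm (Suc n) w x) = Phi n (rot (uu i) (cm n w x))"
      using Phi_step[OF i cm_Vn[OF vw x]] by (simp add: i_def)
    also have "\<dots> = Phi n (cm n w' (rot (uu i) x))" using w'(2) by simp
    also have "\<dots> = g (rot u' (rot (uu i) x))" using u'(2) G_V[OF uG x] by simp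
    finally show ?thesis by (simp add: rot_mult)
  qed
  thus ?case using G_mult[OF u'(1) uG] by blast
qed

lemma Phi_lvl:
  assumes z: "z \<in> Vn n"
  shows "z / lam \<in> Vn (Suc n) \<and> Phi (Suc n) (z / lam) = Phi n z"
proof -
  have "P 1 z = z / lam" by (rule P1)
  hence "z / lam \<in> Vn (Suc n)" using Vn_Suc one_in z by metis
  moreover have "Phi (Suc n) (z / lam) = Phi n z"
    using Phi_step[OF one_in z] P1 uu1 rot_1 by simp
  ultimately show ?thesis by simp
qed

lemma Phi_lvlk:
  "z \<in> Vn n \<Longrightarrow> z / lam^k \<in> Vn (n + k) \<and> Phi (n + k) (z / lam^k) = Phi n z"
proof (induction k)
  case 0 thus ?case by simp
next
  case (Suc k)
  have zk: "z / lam^k \<in> Vn (n + k)" and e: "Phi (n + k) (z / lam^k) = Phi n z" using Suc by auto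
  from zk have h: "(z / lam^k) / lam \<in> Vn (Suc (n + k)) \<and> Phi (Suc (n + k)) ((z / lam^k) / lam) = Phi (n + k) (z / lam^k)"
    by (rule Phi_lvl)
  have eq: "(z / lam^k) / lam = z / lam^Suc k" by (simp add: field_simps)
  from h show ?case by (simp only: eq e add_Suc_right)
qed

definition F :: "complex \<Rightarrow> 'a" where
  "F v = (let n = (SOME n. v / lam^n \<in> Vn n) in Phi n (v / lam^n))"

lemma F_eq:
  assumes v: "v / lam^n \<in> Vn n"
  shows "F v = Phi n (v / lam^n)"
proof -
  define m where "m = (SOME n. v / lam^n \<in> Vn n)"
  have m: "v / lam^m \<in> Vn m" unfolding m_def by (rule someI[of _ n]) (rule v)
  have F: "F v = Phi m (v / lam^m)" unfolding F_def m_def[symmetric] by simp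
  show ?thesis
  proof (cases "m \<le> n")
    case True
    then obtain k where k: "n = m + k" using le_Suc_ex by blast
    have eq: "(v / lam^m) / lam^k = v / lam^n" unfolding k by (simp add: power_add field_simps)
    have "Phi (m+k) ((v/lam^m)/lam^k) = Phi m (v/lam^m)" using Phi_lvlk[OF m] by blast
    hence "Phi n (v/lam^n) = Phi m (v/lam^m)" by (simp only: eq k[symmetric])
    thus ?thesis using F by simp
  next
    case False
    then obtain k where k: "m = n + k" using le_Suc_ex[of n m] by auto
    have eq: "(v / lam^n) / lam^k = v / lam^m" unfolding k by (simp add: power_add field_simps)
    have "Phi (n+k) ((v/lam^n)/lam^k) = Phi n (v/lam^n)" using Phi_lvlk[OF v] by blast
    hence "Phi m (v/lam^m) = Phi n (v/lam^n)" by (simp only: eq k[symmetric])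
    thus ?thesis using F by simp
  qed
qed

lemma F_V: "x \<in> V \<Longrightarrow> F x = g x"
  using F_eq[of x 0] Vn0 by simp

end


context fr begin

definition S0 :: "complex set" where
  "S0 = {(\<Sum>j=1..n. lam^j * nu (w j)) | n w. n \<ge> 1 \<and> valid n w}"

definition Good0 :: "'a set \<Rightarrow> (complex \<Rightarrow> 'a) \<Rightarrow> bool" where
  "Good0 A f \<longleftrightarrow> (\<forall>s\<in>S0. \<forall>x\<in>V. f (x + s) \<in> A) \<and> bij_betw f V A \<and>
     (\<forall>s\<in>S0. \<exists>u\<in>G. \<forall>x\<in>V. f (x + s) = f (rot u x))"

lemma scl_nz: "scl L M \<noteq> 0"
  using basics(1) unfolding scl_def by simp

lemma scl_add_nat: "scl L (int k + M) = lam^k * scl L M"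
  using basics(1) unfolding scl_def by (simp add: power_int_add)

lemma scl_add_nat': "scl L (M + int k) = lam^k * scl L M"
  using scl_add_nat by (simp add: add.commute)

lemma ivl_img: "{M+1..M + int n} = (\<lambda>k. int k + M) ` {1..n}"
proof
  show "{M+1..M + int n} \<subseteq> (\<lambda>k. int k + M) ` {1..n}"
  proof
    fix j assume j: "j \<in> {M+1..M + int n}"
    hence "j = int (nat (j - M)) + M" "nat (j - M) \<in> {1..n}" by auto
    thus "j \<in> (\<lambda>k. int k + M) ` {1..n}" by blast
  qed
qed auto

lemma shift_reindex:
  "(\<Sum>j\<in>{M+1..M + int n}. scl L j * nu (w j)) = scl L M * (\<Sum>k=1..n. lam^k * nu (w (int k + M)))"
proof -
  have inj: "inj_on (\<lambda>k. int k + M) {1..n}" by (auto simp: inj_on_def)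
  have "(\<Sum>j\<in>{M+1..M + int n}. scl L j * nu (w j)) = (\<Sum>k=1..n. scl L (int k + M) * nu (w (int k + M)))"
    unfolding ivl_img by (subst sum.reindex[OF inj]) simp
  also have "\<dots> = scl L M * (\<Sum>k=1..n. lam^k * nu (w (int k + M)))"
    by (simp add: scl_add_nat' sum_distrib_left algebra_simps)
  finally show ?thesis .
qed

lemma shifts_eq: "complex_shifts L N nu M = (\<lambda>s. scl L M * s) ` S0"
proof
  show "complex_shifts L N nu M \<subseteq> (\<lambda>s. scl L M * s) ` S0"
  proof
    fix t assume "t \<in> complex_shifts L N nu M"
    then obtain J w where t: "t = (\<Sum>j\<in>{M+1..J}. scl L j * nu (w j))" and J: "M + 1 \<le> J"
      and w: "\<forall>j\<in>{M+1..J}. w j \<in> {1..N}"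
      unfolding complex_shifts_def by blast
    define n where "n = nat (J - M)"
    have Jn: "J = M + int n" using J n_def by simp
    define w' where "w' = (\<lambda>k::nat. w (int k + M))"
    have "t = scl L M * (\<Sum>k=1..n. lam^k * nu (w' k))" unfolding t Jn w'_def by (rule shift_reindex)
    moreover have "valid n w'" unfolding valid_def w'_def using w Jn by auto
    moreover have "n \<ge> 1" using J n_def by simp
    ultimately show "t \<in> (\<lambda>s. scl L M * s) ` S0" unfolding S0_def by blast
  qed
next
  show "(\<lambda>s. scl L M * s) ` S0 \<subseteq> complex_shifts L N nu M"
  proof
    fix t assume "t \<in> (\<lambda>s. scl L M * s) ` S0"
    then obtain n w' where t: "t = scl L M * (\<Sum>k=1..n. lam^k * nu (w' k))" and n: "n \<ge> 1"
      and v: "valid n w'" unfolding S0_def by blast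
    define w where "w = (\<lambda>j::int. w' (nat (j - M)))"
    have "(\<Sum>j\<in>{M+1..M + int n}. scl L j * nu (w j)) = scl L M * (\<Sum>k=1..n. lam^k * nu (w (int k + M)))"
      by (rule shift_reindex)
    also have "\<dots> = t" unfolding t w_def by simp
    finally have "t = (\<Sum>j\<in>{M+1..M + int n}. scl L j * nu (w j))" by simp
    moreover have "\<forall>j\<in>{M+1..M + int n}. w j \<in> {1..N}"
    proof
      fix j assume "j \<in> {M+1..M + int n}"
      hence "nat (j - M) \<in> {1..n}" by auto
      thus "w j \<in> {1..N}" using v unfolding valid_def w_def by blast
    qed
    moreover have "M + 1 \<le> M + int n" using n by simp
    ultimately show "t \<in> complex_shifts L N nu M" unfolding complex_shifts_def by blast
  qed
qed

lemma VMM_eq: "V_MM L N nu M = (\<lambda>x. scl L M * x) ` V" unfolding V_MM_def by simp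

lemma scl_inj: "inj (\<lambda>x. scl L M * x)" using scl_nz by (auto simp: inj_def)

lemma bary_eq: "barycenter_M L N nu M = scl L M * bar"
proof -
  have "(\<Sum>v\<in>V_MM L N nu M. v) = (\<Sum>x\<in>V. scl L M * x)" unfolding VMM_eq
    by (subst sum.reindex) (use scl_inj in \<open>auto simp: inj_on_def\<close>)
  also have "\<dots> = scl L M * sum id V" by (simp add: sum_distrib_left)
  finally have s: "(\<Sum>v\<in>V_MM L N nu M. v) = scl L M * sum id V" .
  have c: "card (V_MM L N nu M) = card V" unfolding VMM_eq
    by (rule card_image) (use scl_inj in \<open>auto simp: inj_on_def\<close>)
  show ?thesis unfolding barycenter_M_def s c bar_def by simp
qed

definition RM :: "int \<Rightarrow> complex \<Rightarrow> complex \<Rightarrow> complex" where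
  "RM M u z = scl L M * bar + u * (z - scl L M * bar)"

lemma RM_scl: "RM M u (scl L M * x) = scl L M * rot u x"
  unfolding RM_def rot_def by (simp add: algebra_simps)

lemma rots_eq: "rotations_M L N nu M = RM M ` G"
proof
  show "rotations_M L N nu M \<subseteq> RM M ` G"
  proof
    fix R assume "R \<in> rotations_M L N nu M"
    then obtain u where u: "norm u = 1" "R = RM M u" "R ` V_MM L N nu M = V_MM L N nu M"
      unfolding rotations_M_def bary_eq RM_def by blast
    have "R ` V_MM L N nu M = (\<lambda>x. scl L M * x) ` rot u ` V"
      unfolding VMM_eq u(2) image_image RM_scl by simp
    hence "(\<lambda>x. scl L M * x) ` rot u ` V = (\<lambda>x. scl L M * x) ` V" using u(3) VMM_eq by simp
    hence "rot u ` V = V" by (subst (asm) inj_image_eq_iff[OF scl_inj])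
    thus "R \<in> RM M ` G" using u unfolding G_def by blast
  qed
next
  show "RM M ` G \<subseteq> rotations_M L N nu M"
  proof
    fix R assume "R \<in> RM M ` G"
    then obtain u where u: "u \<in> G" "R = RM M u" by blast
    have "R ` V_MM L N nu M = (\<lambda>x. scl L M * x) ` rot u ` V"
      unfolding VMM_eq u(2) image_image RM_scl by simp
    also have "\<dots> = V_MM L N nu M" using u(1) unfolding G_def VMM_eq by simp
    finally show "R \<in> rotations_M L N nu M" using u unfolding rotations_M_def G_def bary_eq RM_def[abs_def]
      by auto
  qed
qed

lemma good_iff: "good_labelling L N nu A M l \<longleftrightarrow> Good0 A (\<lambda>z. l (scl L M * z))"
proof -
  let ?c = "scl L M"
  let ?f = "\<lambda>z. l (?c * z)"
  have cv: "cell_vertices L N nu M (?c * s) = (\<lambda>x. ?c * (x + s)) ` V" for s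
    unfolding cell_vertices_def by (simp add: algebra_simps)
  have p1: "(\<forall>v\<in>V_M_inf L N nu M. l v \<in> A) \<longleftrightarrow> (\<forall>s\<in>S0. \<forall>x\<in>V. ?f (x + s) \<in> A)"
    unfolding V_M_inf_def shifts_eq by (auto simp: cv)
  have p2: "bij_betw l (V_MM L N nu M) A \<longleftrightarrow> bij_betw ?f V A"
  proof -
    have b: "bij_betw (\<lambda>x. ?c * x) V (V_MM L N nu M)" unfolding VMM_eq
      by (rule inj_on_imp_bij_betw) (use scl_inj in \<open>auto simp: inj_on_def\<close>)
    show ?thesis using bij_betw_comp_iff[OF b, of l A] by (simp add: comp_def)
  qed
  have p3: "(\<forall>t\<in>complex_shifts L N nu M. \<exists>R\<in>rotations_M L N nu M.
              \<forall>v\<in>cell_vertices L N nu M t. l v = l (R (v - t))) \<longleftrightarrow>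
            (\<forall>s\<in>S0. \<exists>u\<in>G. \<forall>x\<in>V. ?f (x + s) = ?f (rot u x))"
  proof -
    have e: "(\<forall>v\<in>cell_vertices L N nu M (?c * s). l v = l (RM M u (v - ?c * s))) \<longleftrightarrow>
             (\<forall>x\<in>V. ?f (x + s) = ?f (rot u x))" for s u
    proof -
      have "?c * (x + s) - ?c * s = ?c * x" for x by (simp add: algebra_simps)
      thus ?thesis unfolding cv by (simp add: RM_scl)
    qed
    show ?thesis unfolding shifts_eq rots_eq using e by auto
  qed
  show ?thesis unfolding good_labelling_def Good0_def p1 p2 p3 ..
qed

end

context fr2 begin

lemma F_good: "Good0 A F"
proof -
  have gA: "g x \<in> A" if "x \<in> V" for x using gbij that bij_betwE by blast
  have main: "\<exists>u\<in>G. \<forall>x\<in>V. F (x + s) = g (rot u x)" if s: "s \<in> S0" for s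
  proof -
    obtain n w where sd: "s = (\<Sum>j=1..n. lam^j * nu (w j))" and v: "valid n w" using s unfolding S0_def by blast
    obtain u where u: "u \<in> G" "\<forall>x\<in>V. Phi n (cm n w x) = g (rot u x)" using Phi_cell[OF v] by blast
    have "F (x + s) = g (rot u x)" if x: "x \<in> V" for x
    proof -
      have ln: "lam^n \<noteq> 0" using lam0 by simp
      have "x + s = lam^n * cm n w x" using cm_scale sd by simp
      hence "(x + s) / lam^n = cm n w x" using ln by (simp add: field_simps)
      hence "F (x + s) = Phi n (cm n w x)" using F_eq cm_Vn[OF v x] by metis
      thus ?thesis using u x by simp
    qed
    thus ?thesis using u by blast
  qed
  have "bij_betw F V A" using gbij F_V by (simp cong: bij_betw_cong)
  moreover have "\<forall>s\<in>S0. \<forall>x\<in>V. F (x + s) \<in> A"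
  proof (intro ballI)
    fix s x assume "s \<in> S0" "x \<in> V"
    then obtain u where "u \<in> G" "F (x + s) = g (rot u x)" using main by blast
    thus "F (x + s) \<in> A" using gA G_V \<open>x \<in> V\<close> by simp
  qed
  moreover have "\<forall>s\<in>S0. \<exists>u\<in>G. \<forall>x\<in>V. F (x + s) = F (rot u x)"
  proof
    fix s assume "s \<in> S0"
    then obtain u where u: "u \<in> G" "\<forall>x\<in>V. F (x + s) = g (rot u x)" using main by blast
    have "\<forall>x\<in>V. F (x + s) = F (rot u x)" using u F_V G_V by simp
    thus "\<exists>u\<in>G. \<forall>x\<in>V. F (x + s) = F (rot u x)" using u(1) by blast
  qed
  ultimately show ?thesis unfolding Good0_def by blast
qed

end


theorem proposition3p6:
  fixes L :: real and N :: nat and nu :: "nat \<Rightarrow> complex" and K0 :: "complex set"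
    and A :: "'a set" and M :: int and l0 :: "complex \<Rightarrow> 'a"
  assumes fractal: "planar_simple_nested_fractal L N nu K0"
    and k3: "card (ess_fixed_pts L N nu) \<ge> 3"
    and alphabet: "finite A" "card A = card (ess_fixed_pts L N nu)"
    and l0_bij: "bij_betw l0 (V_MM L N nu M) A"
  shows "good_labelling_property L N nu A \<longleftrightarrow>
    (\<exists>l. (\<forall>v\<in>V_M_next L N nu K0 M. l v \<in> A) \<and>
         (\<forall>v\<in>V_MM L N nu M. l v = l0 v) \<and>
         (\<forall>i\<in>{1..N}. \<exists>R\<in>rotations_M L N nu M.
            \<forall>v\<in>cell_vertices L N nu M (scl L (M + 1) * nu i).
              l (R (v - scl L (M + 1) * nu i)) = l v))"
proof -
  interpret fr L N nu K0 using fractal k3 by unfold_locales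
  let ?c = "scl L M"
  have c0: "?c \<noteq> 0" by (rule scl_nz)
  have sclM1: "scl L (M + 1) = lam * ?c" using scl_add_nat'[of M 1] by simp
  have cell_i: "cell_vertices L N nu M (scl L (M + 1) * nu i) = (\<lambda>x. ?c * (x + lam * nu i)) ` V" for i
    unfolding cell_vertices_def sclM1 by (simp add: algebra_simps)
  have diff_i: "?c * (x + lam * nu i) - scl L (M + 1) * nu i = ?c * x" for x i
    unfolding sclM1 by (simp add: algebra_simps)
  have s_i: "lam * nu i \<in> S0" if "i \<in> {1..N}" for i
  proof -
    have "valid 1 (\<lambda>_. i)" using that unfolding valid_def by simp
    moreover have "lam * nu i = (\<Sum>j=1..1. lam^j * nu ((\<lambda>_. i) j))" by simp
    ultimately have "\<exists>n w. lam * nu i = (\<Sum>j=1..n. lam^j * nu (w j)) \<and> 1 \<le> n \<and> valid n w"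
      by (intro exI[of _ "1::nat"] exI[of _ "\<lambda>_::nat. i"]) simp
    thus ?thesis unfolding S0_def by (simp only: mem_Collect_eq)
  qed
  have bVMM: "bij_betw (\<lambda>x. ?c * x) V (V_MM L N nu M)" unfolding VMM_eq
    by (rule inj_on_imp_bij_betw) (use scl_inj in \<open>auto simp: inj_on_def\<close>)
  show ?thesis
  proof
    assume "good_labelling_property L N nu A"
    then obtain M' l' where "good_labelling L N nu A M' l'" unfolding good_labelling_property_def by blast
    hence G0: "Good0 A (\<lambda>z. l' (scl L M' * z))" by (simp add: good_iff)
    define f where "f = (\<lambda>z. l' (scl L M' * z))"
    have fbij: "bij_betw f V A" and fA: "\<forall>s\<in>S0. \<forall>x\<in>V. f (x + s) \<in> A"
      and frot: "\<forall>s\<in>S0. \<exists>u\<in>G. \<forall>x\<in>V. f (x + s) = f (rot u x)"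
      using G0 unfolding Good0_def f_def by auto
    define \<sigma> where "\<sigma> a = l0 (?c * inv_into V f a)" for a
    define l where "l v = \<sigma> (f (v / ?c))" for v
    have \<sigma>A: "\<sigma> a \<in> A" if "a \<in> A" for a
    proof -
      have "inv_into V f a \<in> V" using bij_betw_inv_into[OF fbij] that bij_betwE by blast
      hence "?c * inv_into V f a \<in> V_MM L N nu M" unfolding VMM_eq by blast
      thus ?thesis unfolding \<sigma>_def using l0_bij bij_betwE by blast
    qed
    have l_scl: "l (?c * y) = \<sigma> (f y)" for y unfolding l_def using c0 by simp
    have a: "\<forall>v\<in>V_M_next L N nu K0 M. l v \<in> A"
    proof
      fix v assume "v \<in> V_M_next L N nu K0 M"
      then obtain t where t: "t \<in> complex_shifts L N nu M" "v \<in> cell_vertices L N nu M t"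
        unfolding V_M_next_def by blast
      obtain s where s: "s \<in> S0" "t = ?c * s" using t(1) unfolding shifts_eq by blast
      obtain x where x: "x \<in> V" "v = ?c * x + t" using t(2) unfolding cell_vertices_def by blast
      have "v = ?c * (x + s)" using x s by (simp add: algebra_simps)
      thus "l v \<in> A" using l_scl \<sigma>A fA s x by simp
    qed
    have b: "\<forall>v\<in>V_MM L N nu M. l v = l0 v"
    proof
      fix v assume "v \<in> V_MM L N nu M"
      then obtain x where x: "x \<in> V" "v = ?c * x" unfolding VMM_eq by blast
      have "inv_into V f (f x) = x" using bij_betw_imp_inj_on[OF fbij] x(1) by (rule inv_into_f_f)
      thus "l v = l0 v" using x l_scl unfolding \<sigma>_def by simp
    qed
    have c: "\<forall>i\<in>{1..N}. \<exists>R\<in>rotations_M L N nu M.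
            \<forall>v\<in>cell_vertices L N nu M (scl L (M + 1) * nu i).
              l (R (v - scl L (M + 1) * nu i)) = l v"
    proof
      fix i assume i: "i \<in> {1..N}"
      obtain u where u: "u \<in> G" "\<forall>x\<in>V. f (x + lam * nu i) = f (rot u x)" using frot s_i[OF i] by blast
      have "RM M u \<in> rotations_M L N nu M" unfolding rots_eq using u(1) by blast
      moreover have "\<forall>v\<in>cell_vertices L N nu M (scl L (M + 1) * nu i).
              l (RM M u (v - scl L (M + 1) * nu i)) = l v"
        unfolding cell_i using u(2) by (auto simp: diff_i RM_scl l_scl)
      ultimately show "\<exists>R\<in>rotations_M L N nu M.
            \<forall>v\<in>cell_vertices L N nu M (scl L (M + 1) * nu i).
              l (R (v - scl L (M + 1) * nu i)) = l v" by blast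
    qed
    show "\<exists>l. (\<forall>v\<in>V_M_next L N nu K0 M. l v \<in> A) \<and>
         (\<forall>v\<in>V_MM L N nu M. l v = l0 v) \<and>
         (\<forall>i\<in>{1..N}. \<exists>R\<in>rotations_M L N nu M.
            \<forall>v\<in>cell_vertices L N nu M (scl L (M + 1) * nu i).
              l (R (v - scl L (M + 1) * nu i)) = l v)" using a b c by blast
  next
    assume "\<exists>l. (\<forall>v\<in>V_M_next L N nu K0 M. l v \<in> A) \<and>
         (\<forall>v\<in>V_MM L N nu M. l v = l0 v) \<and>
         (\<forall>i\<in>{1..N}. \<exists>R\<in>rotations_M L N nu M.
            \<forall>v\<in>cell_vertices L N nu M (scl L (M + 1) * nu i).
              l (R (v - scl L (M + 1) * nu i)) = l v)"
    then obtain l where lb: "\<forall>v\<in>V_MM L N nu M. l v = l0 v"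
      and lc: "\<forall>i\<in>{1..N}. \<exists>R\<in>rotations_M L N nu M.
            \<forall>v\<in>cell_vertices L N nu M (scl L (M + 1) * nu i).
              l (R (v - scl L (M + 1) * nu i)) = l v" by blast
    define g where "g z = l (?c * z)" for z
    have "bij_betw l (V_MM L N nu M) A" using l0_bij lb by (simp cong: bij_betw_cong)
    hence gbij: "bij_betw g V A" using bij_betw_comp_iff[OF bVMM, of l A] unfolding g_def by (simp add: comp_def)
    have gcons: "\<forall>i\<in>{1..N}. \<exists>u\<in>G. \<forall>x\<in>V. g (rot u x) = g (x + lam * nu i)"
    proof
      fix i assume i: "i \<in> {1..N}"
      obtain R where R: "R \<in> rotations_M L N nu M"
        "\<forall>v\<in>cell_vertices L N nu M (scl L (M + 1) * nu i). l (R (v - scl L (M + 1) * nu i)) = l v"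
        using lc i by blast
      obtain u where u: "u \<in> G" "R = RM M u" using R(1) unfolding rots_eq by blast
      have "\<forall>x\<in>V. g (rot u x) = g (x + lam * nu i)"
        using R(2) unfolding cell_i u(2) by (auto simp: diff_i RM_scl g_def)
      thus "\<exists>u\<in>G. \<forall>x\<in>V. g (rot u x) = g (x + lam * nu i)" using u(1) by blast
    qed
    interpret fr2 L N nu K0 g A by unfold_locales (use gbij gcons in auto)
    have "Good0 A F" by (rule F_good)
    moreover have "scl L 0 = 1" unfolding scl_def by simp
    ultimately have "good_labelling L N nu A 0 F" by (simp add: good_iff)
    thus "good_labelling_property L N nu A" unfolding good_labelling_property_def by blast
  qed
qed


end
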